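(* Let $\alpha>0$ and $\beta\in\mathbb{R}$ satisfy one of: $\beta<\alpha<1$; or $\beta<1<\alpha$; or $\beta<\alpha=1$. Then the generalized $\beta$-Ces\`aro operator $C_{g_\beta}$ is a compact linear operator from $(\mathcal{B}_\alpha^0,\|\cdot\|_{\mathcal{B}_\alpha})$ to itself.
   Context: $\mathbb{D}=\{z\in\mathbb{C}:|z|<1\}$. For $\alpha>0$, the $\alpha$-Bloch space $\mathcal{B}_\alpha$ is the space of analytic functions $f$ on $\mathbb{D}$ with $\|f\|_{\mathcal{B}_\alpha}:=\sup_{z\in\mathbb{D}}(1-|z|^2)^\alpha|f'(z)|<\infty$. $\mathcal{B}_\alpha^0=\{f\in\mathcal{B}_\alpha: f(0)=0\}$, normed by $\|\cdot\|_{\mathcal{B}_\alpha}$. For $\beta\in\mathbb{R}$, let $g_\beta(w)=\sum_{j=1}^k\frac{a_j}{(1-b_jw)^\beta}+h(w)$, where $k\ge1$, $b_1,\dots,b_k$ are distinct points of the unit circle, $a_j\in\mathbb{C}$ with $|a_j|>0$, $h$ is a bounded analytic function on $\mathbb{D}$, and powers are principal branches. The generalized $\beta$-Ces\`aro operator is $C_{g_\beta}(f)(z)=\int_0^z\frac{f(w)g_\beta(w)}{w}\,dw$ for analytic $f$ on $\mathbb{D}$ with $f(0)=0$. *)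

theory Defs
  imports "HOL-Complex_Analysis.Complex_Analysis"
begin

definition bloch_norm :: "real \<Rightarrow> (complex \<Rightarrow> complex) \<Rightarrow> real" where
  "bloch_norm \<alpha> f = (SUP z\<in>ball 0 1. (1 - (norm z)\<^sup>2) powr \<alpha> * norm (deriv f z))"

definition bloch_space :: "real \<Rightarrow> (complex \<Rightarrow> complex) set" where
  "bloch_space \<alpha> = {f. f holomorphic_on ball 0 1 \<and>
       bdd_above ((\<lambda>z. (1 - (norm z)\<^sup>2) powr \<alpha> * norm (deriv f z)) ` ball 0 1)}"

definition bloch0_space :: "real \<Rightarrow> (complex \<Rightarrow> complex) set" where
  "bloch0_space \<alpha> = {f \<in> bloch_space \<alpha>. f 0 = 0}"

definition g_beta :: "real \<Rightarrow> nat \<Rightarrow> (nat \<Rightarrow> complex) \<Rightarrow> (nat \<Rightarrow> complex)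
                      \<Rightarrow> (complex \<Rightarrow> complex) \<Rightarrow> complex \<Rightarrow> complex" where
  "g_beta \<beta> k a b h w = (\<Sum>j=1..k. a j / (1 - b j * w) powr (of_real \<beta>)) + h w"

definition cesaro_op :: "(complex \<Rightarrow> complex) \<Rightarrow> (complex \<Rightarrow> complex) \<Rightarrow> complex \<Rightarrow> complex" where
  "cesaro_op g f z = contour_integral (linepath 0 z) (\<lambda>w. f w * g w / w)"

definition compact_linear_operator_on ::
  "(complex \<Rightarrow> complex) set \<Rightarrow> ((complex \<Rightarrow> complex) \<Rightarrow> real)
     \<Rightarrow> ((complex \<Rightarrow> complex) \<Rightarrow> (complex \<Rightarrow> complex)) \<Rightarrow> bool" where
  "compact_linear_operator_on X N T \<longleftrightarrow>
     (\<forall>f\<in>X. T f \<in> X) \<and>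
     (\<forall>f\<in>X. \<forall>g\<in>X. \<forall>c d :: complex.
        (\<forall>z\<in>ball 0 1. T (\<lambda>w. c * f w + d * g w) z = c * T f z + d * T g z)) \<and>
     (\<forall>fs :: nat \<Rightarrow> complex \<Rightarrow> complex. (\<forall>n. fs n \<in> X) \<and> bdd_above (range (\<lambda>n. N (fs n))) \<longrightarrow>
        (\<exists>(r :: nat \<Rightarrow> nat) F. strict_mono r \<and> F \<in> X \<and> (\<lambda>n. N (T (fs (r n)) - F)) \<longlonglongrightarrow> 0))"

end

theory Submission
  imports Defs
begin


lemma schwarz_scaled:
  fixes f :: "complex \<Rightarrow> complex"
  assumes holf: "f holomorphic_on ball 0 r" and f0: "f 0 = 0" and r: "r > 0" and B: "B \<ge> 0"
    and bnd: "\<And>w. w \<in> ball 0 r \<Longrightarrow> norm (f w) \<le> B" and z: "z \<in> ball 0 r"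
  shows "norm (if z = 0 then deriv f 0 else f z / z) \<le> B / r"
proof -
  have main: "norm (if z = 0 then deriv f 0 else f z / z) \<le> (B + e) / r" if e: "e > 0" for e
  proof -
    define c where "c = B + e"
    have c: "c > 0" using B e by (simp add: c_def)
    define F where "F = (\<lambda>w. f (of_real r * w) / of_real c)"
    have holF: "F holomorphic_on ball 0 1"
      unfolding F_def
      by (rule holomorphic_intros holomorphic_on_compose_gen[where g=f, unfolded o_def, OF _ holf] | use r c in \<open>auto simp: norm_mult\<close>)+
    have F0: "F 0 = 0" using f0 by (simp add: F_def)
    have Fb: "norm (F w) < 1" if "norm w < 1" for w
    proof -
      have "of_real r * w \<in> ball 0 r" using that r by (simp add: norm_mult)
      then have "norm (f (of_real r * w)) \<le> B" by (rule bnd)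
      moreover have "norm (of_real c :: complex) = c" using c by simp
      ultimately show ?thesis using c e by (simp add: F_def norm_divide c_def divide_less_eq)
    qed
    have S1: "norm (F x) \<le> norm x" if "norm x < 1" for x
      using Schwarz_Lemma(1)[of F x] holF F0 Fb that by blast
    have S2: "norm (deriv F 0) \<le> 1"
      using Schwarz_Lemma(2)[of F 0] holF F0 Fb by force
    show ?thesis
    proof (cases "z = 0")
      case True
      have "0 \<in> ball (0::complex) r" using r by simp
      then have "f field_differentiable at 0"
        using holf holomorphic_on_imp_differentiable_at by blast
      then have df: "(f has_field_derivative deriv f 0) (at 0)"
        using DERIV_deriv_iff_field_differentiable by blast
      have dm: "((\<lambda>w. of_real r * w) has_field_derivative of_real r) (at 0)"
        by (rule derivative_eq_intros | simp)+
      have d2: "((\<lambda>w. f (of_real r * w)) has_field_derivative deriv f 0 * of_real r) (at 0)"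
        using DERIV_chain2[where f=f and g="\<lambda>w. of_real r * w" and x=0 and Da="deriv f 0", OF _ dm] df
        by simp
      have "(F has_field_derivative (deriv f 0 * of_real r) / of_real c) (at 0)"
        unfolding F_def by (rule DERIV_cdivide[OF d2])
      then have "deriv F 0 = (deriv f 0 * of_real r) / of_real c" by (rule DERIV_imp_deriv)
      with S2 have "norm (deriv f 0) * r / c \<le> 1" using r c by (simp add: norm_divide norm_mult)
      then show ?thesis using True r c by (simp add: c_def field_simps)
    next
      case False
      have "norm (z / of_real r) < 1" using z r by (simp add: norm_divide)
      from S1[OF this] have "norm (f z) / c \<le> norm z / r"
        using r c by (simp add: F_def norm_divide)
      then have "norm (f z) \<le> c * norm z / r" using r c by (simp add: field_simps)
      then show ?thesis using False r c by (simp add: c_def norm_divide field_simps)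
    qed
  qed
  show ?thesis
  proof (rule field_le_epsilon)
    fix e :: real assume "e > 0"
    then have "e * r > 0" using r by simp
    from main[OF this] show "norm (if z = 0 then deriv f 0 else f z / z) \<le> B / r + e"
      using r by (simp add: field_simps)
  qed
qed



lemma growth:
  fixes f :: "complex \<Rightarrow> complex" and \<alpha> \<gamma> M :: real
  assumes holf: "f holomorphic_on ball 0 1" and f0: "f 0 = 0" and M: "M \<ge> 0"
    and bnd: "\<And>w. w \<in> ball 0 1 \<Longrightarrow> (1 - (norm w)\<^sup>2) powr \<alpha> * norm (deriv f w) \<le> M"
    and apos: "\<alpha> > 0" and g: "\<gamma> > 0" and ag: "\<alpha> \<le> \<gamma> + 1" and z: "z \<in> ball 0 1"
  shows "norm (f z) \<le> M / \<gamma> * (1 - norm z) powr (-\<gamma>)"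
proof -
  define a where "a = norm z"
  have a0: "0 \<le> a" "a < 1" using z by (auto simp: a_def)
  have dbound: "norm (deriv f w) \<le> M * (1 - norm w) powr (-\<gamma>-1)" if "w \<in> ball 0 1" for w
  proof -
    have w1: "norm w < 1" using that by simp
    have p: "0 < 1 - norm w" using w1 by simp
    have "norm w * norm w \<le> norm w" using w1 by (simp add: mult_left_le_one_le)
    then have le1: "1 - norm w \<le> 1 - (norm w)\<^sup>2" by (simp add: power2_eq_square)
    have "(1 - norm w) powr (\<gamma>+1) \<le> (1 - norm w) powr \<alpha>"
      using ag p w1 by (intro powr_mono') auto
    also have "\<dots> \<le> (1 - (norm w)\<^sup>2) powr \<alpha>"
      using apos p le1 by (intro powr_mono2) auto
    finally have Q: "(1 - norm w) powr (\<gamma>+1) \<le> (1 - (norm w)\<^sup>2) powr \<alpha>" .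
    have Qp: "0 < (1 - norm w) powr (\<gamma>+1)" using p by simp
    have "(1 - norm w) powr (\<gamma>+1) * norm (deriv f w) \<le> (1 - (norm w)\<^sup>2) powr \<alpha> * norm (deriv f w)"
      using Q by (simp add: mult_right_mono)
    also have "\<dots> \<le> M" using bnd[OF that] .
    finally have "norm (deriv f w) \<le> M / (1 - norm w) powr (\<gamma>+1)"
      using Qp by (simp add: field_simps)
    also have "\<dots> = M * (1 - norm w) powr (-(\<gamma>+1))"
      by (simp only: divide_inverse powr_minus)
    also have "-(\<gamma>+1) = -\<gamma>-1" by simp
    finally show ?thesis .
  qed
  show ?thesis
  proof (cases "z = 0")
    case True
    then show ?thesis using f0 M g by simp
  next
    case False
    define F where "F = (\<lambda>t::real. f (t *\<^sub>R z))"
    define \<phi> where "\<phi> = (\<lambda>t::real. M / \<gamma> * (1 - t * a) powr (-\<gamma>))"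
    have inball: "t *\<^sub>R z \<in> ball 0 1" if "0 \<le> t" "t \<le> 1" for t
    proof -
      have "norm (t *\<^sub>R z) = t * a" using that by (simp add: a_def)
      also have "\<dots> \<le> a" using that a0 by (simp add: mult_left_le_one_le)
      finally show ?thesis using a0 by simp
    qed
    have pos: "0 < 1 - t * a" if "0 \<le> t" "t \<le> 1" for t
      using that a0 mult_left_le_one_le[of a t] by linarith
    have Fc: "continuous_on {0..1} F"
      unfolding F_def
      by (rule continuous_on_compose2[OF holomorphic_on_imp_continuous_on[OF holf]])
         (auto intro!: continuous_intros inball)
    have \<phi>c: "continuous_on {0..1} \<phi>"
      unfolding \<phi>_def using pos g by (auto intro!: continuous_intros) (metis less_irrefl)
    have Fd: "(F has_vector_derivative (z * deriv f (t *\<^sub>R z))) (at t)" if "0 < t" "t < 1" for t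
    proof -
      have d1: "((\<lambda>t. t *\<^sub>R z) has_vector_derivative z) (at t)"
        by (auto intro!: derivative_eq_intros)
      have d2: "(f has_field_derivative deriv f (t *\<^sub>R z)) (at (t *\<^sub>R z))"
        using holomorphic_derivI[OF holf open_ball inball] that by simp
      show ?thesis
        using field_vector_diff_chain_at[OF d1 d2] by (simp add: F_def o_def)
    qed
    have \<phi>d: "(\<phi> has_vector_derivative (M * a * (1 - t * a) powr (-\<gamma>-1))) (at t)" if "0 < t" "t < 1" for t
    proof -
      have "(\<phi> has_real_derivative (M / \<gamma> * ((-\<gamma>) * (1 - t * a) powr (-\<gamma>-1) * (0 - (1 * a))))) (at t)"
        unfolding \<phi>_def using pos[of t] that
        by (intro derivative_eq_intros refl) auto
      moreover have "M / \<gamma> * ((-\<gamma>) * (1 - t * a) powr (-\<gamma>-1) * (0 - (1 * a))) = M * a * (1 - t * a) powr (-\<gamma>-1)"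
        using g by (simp add: field_simps)
      ultimately show ?thesis by (simp add: has_real_derivative_iff_has_vector_derivative)
    qed
    have bd: "norm (z * deriv f (t *\<^sub>R z)) \<le> M * a * (1 - t * a) powr (-\<gamma>-1)" if "0 < t" "t < 1" for t
    proof -
      have "norm (z * deriv f (t *\<^sub>R z)) = a * norm (deriv f (t *\<^sub>R z))" by (simp add: a_def norm_mult)
      also have "\<dots> \<le> a * (M * (1 - norm (t *\<^sub>R z)) powr (-\<gamma>-1))"
        using dbound[OF inball] that a0 by (intro mult_left_mono) auto
      also have "norm (t *\<^sub>R z) = t * a" using that by (simp add: a_def)
      finally show ?thesis by (simp add: mult_ac)
    qed
    have "norm (F 1 - F 0) \<le> \<phi> 1 - \<phi> 0"
      by (rule differentiable_bound_general[OF zero_less_one Fc \<phi>c Fd \<phi>d bd])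
    then have "norm (f z) \<le> M / \<gamma> * (1 - a) powr (-\<gamma>) - M / \<gamma>"
      using f0 by (simp add: F_def \<phi>_def)
    also have "\<dots> \<le> M / \<gamma> * (1 - a) powr (-\<gamma>)" using M g by simp
    finally show ?thesis by (simp add: a_def)
  qed
qed




lemma one_minus_bw:
  fixes b w :: complex
  assumes "norm b \<le> 1" "norm w < 1"
  shows "1 - norm w \<le> norm (1 - b * w)" "norm (1 - b * w) \<le> 2" "1 - b * w \<notin> \<real>\<^sub>\<le>\<^sub>0"
proof -
  have bw: "norm (b * w) \<le> norm w" using assms by (simp add: norm_mult mult_left_le_one_le)
  have "norm (1::complex) \<le> norm (1 - b * w) + norm (b * w)"
    by (metis diff_add_cancel norm_triangle_ineq)
  then show "1 - norm w \<le> norm (1 - b * w)" using bw by simp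
  have "norm (1 - b * w) \<le> norm (1::complex) + norm (b * w)" by (rule norm_triangle_ineq4)
  then show "norm (1 - b * w) \<le> 2" using bw assms by simp
  have "Re (b * w) \<le> norm (b * w)" by (rule complex_Re_le_cmod)
  then have "Re (1 - b * w) > 0" using bw assms by simp
  then show "1 - b * w \<notin> \<real>\<^sub>\<le>\<^sub>0" by (auto simp: complex_nonpos_Reals_iff)
qed

lemma G_holo:
  assumes bj: "\<forall>j\<in>{1..k}. norm (b j) \<le> 1" and holh: "h holomorphic_on ball 0 1"
  shows "g_beta \<beta> k a b h holomorphic_on ball 0 1"
proof -
  have "(\<lambda>w. (\<Sum>j=1..k. a j / (1 - b j * w) powr (of_real \<beta>)) + h w) holomorphic_on ball 0 1"
  proof (intro holomorphic_intros holh)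
    fix j w assume j: "j \<in> {1..k}" and w: "w \<in> ball (0::complex) 1"
    then have nb: "1 - b j * w \<notin> \<real>\<^sub>\<le>\<^sub>0" using one_minus_bw(3)[of "b j" w] bj by auto
    then show "1 - b j * w \<notin> \<real>\<^sub>\<le>\<^sub>0" .
    from nb have "1 - b j * w \<noteq> 0" by auto
    then show "(1 - b j * w) powr complex_of_real \<beta> \<noteq> 0" by (simp add: powr_def)
  qed
  then show ?thesis by (simp add: g_beta_def[abs_def])
qed

lemma G_bound:
  assumes bj: "\<forall>j\<in>{1..k}. norm (b j) \<le> 1" and hb: "\<And>w. w \<in> ball 0 1 \<Longrightarrow> norm (h w) \<le> Bh"
    and z: "z \<in> ball 0 1"
  shows "norm (g_beta \<beta> k a b h z) \<le> ((\<Sum>j=1..k. norm (a j)) * max 1 (2 powr (-\<beta>)) + Bh) * (1 - norm z) powr (- max \<beta> 0)"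
proof -
  define s where "s = 1 - norm z"
  define K where "K = max 1 (2 powr (-\<beta>))"
  have s: "0 < s" "s \<le> 1" using z by (auto simp: s_def)
  have S1: "1 \<le> s powr (- max \<beta> 0)"
    using s powr_mono'[of "- max \<beta> 0" 0 s] by simp
  have Bh: "0 \<le> Bh" using hb[of 0] by (meson centre_in_ball norm_ge_zero order_trans zero_less_one)
  have tb: "norm (a j / (1 - b j * z) powr (of_real \<beta>)) \<le> norm (a j) * K * s powr (- max \<beta> 0)"
    if j: "j \<in> {1..k}" for j
  proof -
    define n where "n = norm (1 - b j * z)"
    have n: "s \<le> n" "n \<le> 2" using one_minus_bw[of "b j" z] bj j z by (auto simp: n_def s_def)
    have np: "0 < n" using n s by simp
    have eq: "norm (a j / (1 - b j * z) powr (of_real \<beta>)) = norm (a j) * (1 / n powr \<beta>)"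
      by (simp add: norm_divide norm_powr_real_powr' n_def)
    have key: "1 / n powr \<beta> \<le> K * s powr (- max \<beta> 0)"
    proof (cases "\<beta> \<ge> 0")
      case True
      have "s powr \<beta> \<le> n powr \<beta>" using True s n by (intro powr_mono2) auto
      then have "1 / n powr \<beta> \<le> 1 / s powr \<beta>" using s np by (intro divide_left_mono) auto
      also have "\<dots> = s powr (- max \<beta> 0)" using True by (simp add: powr_minus_divide)
      also have "\<dots> \<le> K * s powr (- max \<beta> 0)" unfolding K_def using s
        by (intro mult_left_le_one_le[of "s powr _" K, unfolded mult.commute[of K]] | simp)+
      finally show ?thesis .
    next
      case False
      have "1 / n powr \<beta> = n powr (-\<beta>)" by (simp add: powr_minus_divide)
      also have "\<dots> \<le> 2 powr (-\<beta>)" using False n np by (intro powr_mono2) auto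
      also have "\<dots> \<le> K" by (simp add: K_def)
      also have "\<dots> = K * s powr (- max \<beta> 0)" using False s by simp
      finally show ?thesis .
    qed
    have "norm (a j) * (1 / n powr \<beta>) \<le> norm (a j) * (K * s powr (- max \<beta> 0))"
      using key by (rule mult_left_mono) simp
    then show ?thesis unfolding eq by (simp add: mult.assoc)
  qed
  have "norm (g_beta \<beta> k a b h z) \<le> norm (\<Sum>j=1..k. a j / (1 - b j * z) powr (of_real \<beta>)) + norm (h z)"
    unfolding g_beta_def by (rule norm_triangle_ineq)
  also have "\<dots> \<le> (\<Sum>j=1..k. norm (a j) * K * s powr (- max \<beta> 0)) + Bh"
    by (intro add_mono order_trans[OF norm_sum] sum_mono tb hb z) auto
  also have "\<dots> \<le> (\<Sum>j=1..k. norm (a j) * K * s powr (- max \<beta> 0)) + Bh * s powr (- max \<beta> 0)"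
    using S1 Bh by (simp add: mult_le_cancel_left1)
  also have "\<dots> = ((\<Sum>j=1..k. norm (a j)) * K + Bh) * s powr (- max \<beta> 0)"
    by (simp add: sum_distrib_right distrib_right)
  finally show ?thesis by (simp add: K_def s_def)
qed



definition qf :: "(complex \<Rightarrow> complex) \<Rightarrow> complex \<Rightarrow> complex" where
  "qf f z = (if z = 0 then deriv f 0 else f z / z)"

lemma qf_holo:
  assumes holf: "f holomorphic_on ball 0 1" and f0: "f 0 = 0"
  shows "qf f holomorphic_on ball 0 1"
proof -
  have "(\<lambda>z. if z = 0 then deriv f 0 else (f z - f 0) / (z - 0)) holomorphic_on ball 0 1"
    by (rule pole_lemma_open[OF holf open_ball])
  moreover have "(\<lambda>z. if z = 0 then deriv f 0 else (f z - f 0) / (z - 0)) = qf f"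
    using f0 by (auto simp: qf_def fun_eq_iff)
  ultimately show ?thesis by simp
qed

lemma cesaro_props:
  assumes holf: "f holomorphic_on ball 0 1" and f0: "f 0 = 0" and holG: "G holomorphic_on ball 0 1"
  shows "\<And>z. z \<in> ball 0 1 \<Longrightarrow> ((\<lambda>w. f w * G w / w) has_contour_integral cesaro_op G f z) (linepath 0 z)"
    and "\<And>z. z \<in> ball 0 1 \<Longrightarrow> (cesaro_op G f has_field_derivative qf f z * G z) (at z)"
proof -
  define \<psi> where "\<psi> = (\<lambda>w. qf f w * G w)"
  have hol\<psi>: "\<psi> holomorphic_on ball 0 1"
    unfolding \<psi>_def by (intro holomorphic_intros qf_holo holf f0 holG)
  obtain P where P: "\<And>x. x \<in> ball 0 1 \<Longrightarrow> (P has_field_derivative \<psi> x) (at x within ball 0 1)"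
    using holomorphic_convex_primitive'[OF convex_ball open_ball hol\<psi>] by blast
  have hc: "((\<lambda>w. f w * G w / w) has_contour_integral (P z - P 0)) (linepath 0 z)" if z: "z \<in> ball 0 1" for z
  proof -
    have seg: "path_image (linepath 0 z) \<subseteq> ball 0 1"
      using z by (simp add: closed_segment_subset)
    have "(\<psi> has_contour_integral (P z - P 0)) (linepath 0 z)"
      using contour_integral_primitive[OF P valid_path_linepath seg] by simp
    show ?thesis
    proof (cases "z = 0")
      case True then show ?thesis by simp
    next
      case False
      from \<open>(\<psi> has_contour_integral (P z - P 0)) (linepath 0 z)\<close>
      have I: "((\<lambda>x. \<psi> (linepath 0 z x) * (z - 0)) has_integral (P z - P 0)) {0..1}"
        by (simp add: has_contour_integral_linepath)
      have "((\<lambda>x. f (linepath 0 z x) * G (linepath 0 z x) / (linepath 0 z x) * (z - 0)) has_integral (P z - P 0)) {0..1}"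
      proof (rule has_integral_spike_finite[of "{0}", OF _ _ I])
        fix x assume x: "x \<in> {0..1::real} - {0}"
        then have "linepath 0 z x \<noteq> 0" using False by (auto simp: linepath_def)
        then show "f (linepath 0 z x) * G (linepath 0 z x) / linepath 0 z x * (z - 0) = \<psi> (linepath 0 z x) * (z - 0)"
          by (simp add: \<psi>_def qf_def)
      qed simp
      then show ?thesis by (simp add: has_contour_integral_linepath)
    qed
  qed
  have ceq: "cesaro_op G f z = P z - P 0" if "z \<in> ball 0 1" for z
    unfolding cesaro_op_def using hc[OF that] by (rule contour_integral_unique)
  show "((\<lambda>w. f w * G w / w) has_contour_integral cesaro_op G f z) (linepath 0 z)" if "z \<in> ball 0 1" for z
    using hc[OF that] ceq[OF that] by simp
  show "(cesaro_op G f has_field_derivative qf f z * G z) (at z)" if z: "z \<in> ball 0 1" for z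
  proof (rule has_field_derivative_transform_within_open[OF _ open_ball z])
    have "(P has_field_derivative \<psi> z) (at z)"
      using P[OF z] by (simp add: at_within_open[OF z open_ball])
    then show "((\<lambda>x. P x - P 0) has_field_derivative qf f z * G z) (at z)"
      by (auto intro!: derivative_eq_intros simp: \<psi>_def)
    show "\<And>x. x \<in> ball 0 1 \<Longrightarrow> P x - P 0 = cesaro_op G f x" using ceq by simp
  qed
qed

lemma qf_diff:
  assumes "f holomorphic_on ball 0 1" "g holomorphic_on ball 0 1"
  shows "qf (\<lambda>w. f w - g w) z = qf f z - qf g z"
proof (cases "z = 0")
  case True
  have "f field_differentiable at 0" "g field_differentiable at 0"
    using assms holomorphic_on_imp_differentiable_at[of _ "ball 0 1" 0] by auto
  then have "deriv (\<lambda>w. f w - g w) 0 = deriv f 0 - deriv g 0" by (rule deriv_diff)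
  then show ?thesis using True by (simp add: qf_def)
next
  case False
  then show ?thesis by (simp add: qf_def diff_divide_distrib)
qed

context
  fixes \<alpha> \<gamma> \<beta>p C :: real and G :: "complex \<Rightarrow> complex"
  assumes apos: "\<alpha> > 0" and gpos: "\<gamma> > 0" and ag: "\<alpha> \<le> \<gamma> + 1" and epos: "\<alpha> - \<gamma> - \<beta>p > 0"
    and bp: "\<beta>p \<ge> 0" and Cnn: "C \<ge> 0" and holG: "G holomorphic_on ball 0 1"
    and Gb0: "\<forall>w\<in>ball 0 1. norm (G w) \<le> C * (1 - norm w) powr (-\<beta>p)"
begin

lemma Gb: "w \<in> ball 0 1 \<Longrightarrow> norm (G w) \<le> C * (1 - norm w) powr (-\<beta>p)"
  using Gb0 by blast

lemma sq_facts:
  assumes z: "z \<in> ball (0::complex) 1"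
  shows "0 < 1 - (norm z)\<^sup>2" "1 - (norm z)\<^sup>2 \<le> 1"
proof -
  have "(norm z)\<^sup>2 < 1" using z by (simp add: power_less_one_iff abs_square_less_1)
  then show "0 < 1 - (norm z)\<^sup>2" by simp
  show "1 - (norm z)\<^sup>2 \<le> 1" by simp
qed

lemma weight_le:
  fixes z :: complex
  assumes z: "z \<in> ball 0 1"
  shows "(1 - (norm z)\<^sup>2) powr \<alpha> \<le> 2 powr \<alpha> * (1 - norm z) powr \<alpha>"
proof -
  have "1 - (norm z)\<^sup>2 = (1 - norm z) * (1 + norm z)" by (simp add: power2_eq_square algebra_simps)
  also have "\<dots> \<le> (1 - norm z) * 2" using z by (intro mult_left_mono) auto
  finally have le2: "1 - (norm z)\<^sup>2 \<le> (1 - norm z) * 2" .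
  have "(1 - (norm z)\<^sup>2) powr \<alpha> \<le> ((1 - norm z) * 2) powr \<alpha>"
    using le2 apos sq_facts[OF z] by (intro powr_mono2) auto
  also have "((1 - norm z) * 2) powr \<alpha> = 2 powr \<alpha> * (1 - norm z) powr \<alpha>"
    using z by (subst powr_mult) (auto simp: mult.commute)
  finally show ?thesis .
qed

lemma weight_le1:
  fixes z :: complex
  assumes z: "z \<in> ball 0 1"
  shows "(1 - (norm z)\<^sup>2) powr \<alpha> \<le> 1"
  using sq_facts[OF z] apos by (intro powr_le1) auto

lemma weight_bound:
  assumes hold: "d holomorphic_on ball 0 1" and d0: "d 0 = 0" and K: "K \<ge> 0"
    and dK: "\<And>w. w \<in> ball 0 1 \<Longrightarrow> norm (d w) \<le> K * (1 - norm w) powr (-\<gamma>)"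
    and z: "z \<in> ball 0 1"
  shows "(1 - (norm z)\<^sup>2) powr \<alpha> * norm (qf d z * G z)
          \<le> 2 powr \<alpha> * 2 powr (\<gamma>+1) * K * C * (1 - norm z) powr (\<alpha> - \<gamma> - \<beta>p)"
proof -
  define r where "r = (1 + norm z) / 2"
  have z1: "norm z < 1" using z by simp
  have nz: "0 \<le> norm z" by simp
  have r1: "0 < r" unfolding r_def using add_pos_nonneg[OF zero_less_one nz] by simp
  have r2: "r < 1" unfolding r_def using z1 by (simp add: field_simps)
  have r3: "1/2 \<le> r" unfolding r_def using divide_right_mono[of 1 "1 + norm z" 2] by simp
  have r4: "norm z < r" unfolding r_def using z1 by (simp add: field_simps)
  note r = r1 r2 r3 r4
  have s: "0 < 1 - norm z" using z by simp
  have hr: "d holomorphic_on ball 0 r"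
    by (rule holomorphic_on_subset[OF hold]) (use r in auto)
  have bw: "norm (d w) \<le> K * (1 - r) powr (-\<gamma>)" if "w \<in> ball 0 r" for w
  proof -
    have w: "w \<in> ball 0 1" "1 - r \<le> 1 - norm w" using that r by auto
    have "(1 - norm w) powr (-\<gamma>) \<le> (1 - r) powr (-\<gamma>)" using w r gpos by (intro powr_mono2') auto
    then show ?thesis using dK[OF w(1)] K by (meson mult_left_mono order_trans)
  qed
  have q: "norm (qf d z) \<le> K * (1 - r) powr (-\<gamma>) / r"
    unfolding qf_def by (rule schwarz_scaled[OF hr d0 r(1) _ bw]) (use K r in auto)
  have e1: "1 - r = (1 - norm z) / 2" by (simp add: r_def field_simps)
  have "(1 - r) powr (-\<gamma>) = ((1 - norm z) / 2) powr (-\<gamma>)" by (simp only: e1)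
  also have "\<dots> = (1 - norm z) powr (-\<gamma>) / 2 powr (-\<gamma>)" by (rule powr_divide)
  also have "\<dots> = (1 - norm z) powr (-\<gamma>) * 2 powr \<gamma>" by (simp add: powr_minus divide_inverse)
  finally have "(1 - r) powr (-\<gamma>) = (1 - norm z) powr (-\<gamma>) * 2 powr \<gamma>" .
  with q have q1: "norm (qf d z) \<le> K * ((1 - norm z) powr (-\<gamma>) * 2 powr \<gamma>) / r" by simp
  also have "\<dots> \<le> K * ((1 - norm z) powr (-\<gamma>) * 2 powr \<gamma>) * 2"
  proof -
    have "0 \<le> K * ((1 - norm z) powr (-\<gamma>) * 2 powr \<gamma>)" using K by simp
    moreover have "1 / r \<le> 2" using r by (simp add: field_simps)
    ultimately show ?thesis
      using mult_left_mono[of "1/r" 2 "K * ((1 - norm z) powr (-\<gamma>) * 2 powr \<gamma>)"] by simp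
  qed
  also have "\<dots> = 2 powr (\<gamma>+1) * K * (1 - norm z) powr (-\<gamma>)"
    by (simp add: powr_add)
  finally have q2: "norm (qf d z) \<le> 2 powr (\<gamma>+1) * K * (1 - norm z) powr (-\<gamma>)" .
  have "(1 - (norm z)\<^sup>2) powr \<alpha> * norm (qf d z * G z)
        = (1 - (norm z)\<^sup>2) powr \<alpha> * (norm (qf d z) * norm (G z))" by (simp add: norm_mult)
  also have "\<dots> \<le> (2 powr \<alpha> * (1 - norm z) powr \<alpha>) *
       ((2 powr (\<gamma>+1) * K * (1 - norm z) powr (-\<gamma>)) * (C * (1 - norm z) powr (-\<beta>p)))"
    using weight_le[OF z] q2 Gb[OF z] K Cnn
    by (intro mult_mono) auto
  also have "\<dots> = 2 powr \<alpha> * 2 powr (\<gamma>+1) * K * C *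
       ((1 - norm z) powr \<alpha> * (1 - norm z) powr (-\<gamma>) * (1 - norm z) powr (-\<beta>p))"
    by (simp add: mult_ac)
  also have "(1 - norm z) powr \<alpha> * (1 - norm z) powr (-\<gamma>) * (1 - norm z) powr (-\<beta>p)
       = (1 - norm z) powr (\<alpha> + (-\<gamma>) + (-\<beta>p))"
    by (simp only: powr_add)
  also have "\<alpha> + (-\<gamma>) + (-\<beta>p) = \<alpha> - \<gamma> - \<beta>p" by simp
  finally show ?thesis .
qed

lemma inner_bound:
  assumes hold: "d holomorphic_on ball 0 1" and d0: "d 0 = 0" and R: "0 < R" "R < 1"
    and \<delta>: "\<delta> \<ge> 0" and d\<delta>: "\<And>w. w \<in> cball 0 ((1+R)/2) \<Longrightarrow> norm (d w) \<le> \<delta>"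
    and z: "z \<in> ball 0 1" and zR: "norm z \<le> R"
  shows "(1 - (norm z)\<^sup>2) powr \<alpha> * norm (qf d z * G z) \<le> 2 * \<delta> * (C * (1 - R) powr (-\<beta>p))"
proof -
  define r where "r = (1 + R) / 2"
  have r: "0 < r" "r < 1" "1/2 \<le> r" "norm z < r" using R zR by (auto simp: r_def)
  have hr: "d holomorphic_on ball 0 r"
    by (rule holomorphic_on_subset[OF hold]) (use r in auto)
  have bw: "norm (d w) \<le> \<delta>" if "w \<in> ball 0 r" for w
    using d\<delta>[of w] that by (auto simp: r_def)
  have q: "norm (qf d z) \<le> \<delta> / r"
    unfolding qf_def by (rule schwarz_scaled[OF hr d0 r(1) \<delta> bw]) (use r in auto)
  also have "\<dots> \<le> 2 * \<delta>" using r \<delta> mult_left_mono[of 1 "r*2" \<delta>] by (simp add: field_simps)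
  finally have q2: "norm (qf d z) \<le> 2 * \<delta>" .
  have "(1 - norm z) powr (-\<beta>p) \<le> (1 - R) powr (-\<beta>p)"
    using R zR bp by (intro powr_mono2') auto
  then have g2: "norm (G z) \<le> C * (1 - R) powr (-\<beta>p)"
    using Gb[OF z] Cnn by (meson mult_left_mono order_trans)
  have "(1 - (norm z)\<^sup>2) powr \<alpha> * norm (qf d z * G z)
        = (1 - (norm z)\<^sup>2) powr \<alpha> * (norm (qf d z) * norm (G z))" by (simp add: norm_mult)
  also have "\<dots> \<le> 1 * (2 * \<delta> * (C * (1 - R) powr (-\<beta>p)))"
    using weight_le1[OF z] q2 g2 \<delta> Cnn by (intro mult_mono) auto
  finally show ?thesis by simp
qed

lemma T_in_X:
  assumes holf: "f holomorphic_on ball 0 1" and f0: "f 0 = 0" and K: "K \<ge> 0"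
    and fK: "\<And>w. w \<in> ball 0 1 \<Longrightarrow> norm (f w) \<le> K * (1 - norm w) powr (-\<gamma>)"
  shows "cesaro_op G f \<in> bloch0_space \<alpha>"
    and "\<And>z. z \<in> ball 0 1 \<Longrightarrow> deriv (cesaro_op G f) z = qf f z * G z"
proof -
  note der = cesaro_props(2)[OF holf f0 holG]
  show dv: "deriv (cesaro_op G f) z = qf f z * G z" if "z \<in> ball 0 1" for z
    using der[OF that] by (rule DERIV_imp_deriv)
  have hol: "cesaro_op G f holomorphic_on ball 0 1"
    unfolding holomorphic_on_open[OF open_ball] using der by blast
  have bd: "(1 - (norm z)\<^sup>2) powr \<alpha> * norm (deriv (cesaro_op G f) z) \<le> 2 powr \<alpha> * 2 powr (\<gamma>+1) * K * C"
    if z: "z \<in> ball 0 1" for z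
  proof -
    have "(1 - (norm z)\<^sup>2) powr \<alpha> * norm (deriv (cesaro_op G f) z)
        \<le> 2 powr \<alpha> * 2 powr (\<gamma>+1) * K * C * (1 - norm z) powr (\<alpha> - \<gamma> - \<beta>p)"
      using weight_bound[OF holf f0 K fK z] dv[OF z] by simp
    also have "\<dots> \<le> 2 powr \<alpha> * 2 powr (\<gamma>+1) * K * C * 1"
      using z epos K Cnn by (intro mult_left_mono powr_le1) auto
    finally show ?thesis by simp
  qed
  have "bdd_above ((\<lambda>z. (1 - (norm z)\<^sup>2) powr \<alpha> * norm (deriv (cesaro_op G f) z)) ` ball 0 1)"
    by (rule bdd_aboveI2[OF bd])
  then show "cesaro_op G f \<in> bloch0_space \<alpha>"
    using hol by (simp add: bloch0_space_def bloch_space_def cesaro_op_def)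
qed

lemma X_growth:
  assumes fX: "f \<in> bloch0_space \<alpha>"
  shows "bloch_norm \<alpha> f \<ge> 0"
    and "\<And>w. w \<in> ball 0 1 \<Longrightarrow> norm (f w) \<le> bloch_norm \<alpha> f / \<gamma> * (1 - norm w) powr (-\<gamma>)"
proof -
  have holf: "f holomorphic_on ball 0 1" and f0: "f 0 = 0"
    and bdd: "bdd_above ((\<lambda>z. (1 - (norm z)\<^sup>2) powr \<alpha> * norm (deriv f z)) ` ball 0 1)"
    using fX by (auto simp: bloch0_space_def bloch_space_def)
  have bnd: "(1 - (norm w)\<^sup>2) powr \<alpha> * norm (deriv f w) \<le> bloch_norm \<alpha> f" if "w \<in> ball 0 1" for w
    unfolding bloch_norm_def using bdd that by (rule cSUP_upper2) simp
  have "0 \<le> (1 - (norm (0::complex))\<^sup>2) powr \<alpha> * norm (deriv f 0)" by simp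
  also have "\<dots> \<le> bloch_norm \<alpha> f" by (rule bnd) simp
  finally show nn: "bloch_norm \<alpha> f \<ge> 0" .
  show "norm (f w) \<le> bloch_norm \<alpha> f / \<gamma> * (1 - norm w) powr (-\<gamma>)" if "w \<in> ball 0 1" for w
    by (rule growth[OF holf f0 nn bnd apos gpos ag that])
qed

lemma T_linear:
  assumes fX: "f \<in> bloch0_space \<alpha>" and gX: "g \<in> bloch0_space \<alpha>" and z: "z \<in> ball 0 1"
  shows "cesaro_op G (\<lambda>w. c * f w + d * g w) z = c * cesaro_op G f z + d * cesaro_op G g z"
proof -
  have holf: "f holomorphic_on ball 0 1" "f 0 = 0" "g holomorphic_on ball 0 1" "g 0 = 0"
    using fX gX by (auto simp: bloch0_space_def bloch_space_def)
  have If: "((\<lambda>w. f w * G w / w) has_contour_integral cesaro_op G f z) (linepath 0 z)"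
    by (rule cesaro_props(1)[OF holf(1,2) holG z])
  have Ig: "((\<lambda>w. g w * G w / w) has_contour_integral cesaro_op G g z) (linepath 0 z)"
    by (rule cesaro_props(1)[OF holf(3,4) holG z])
  have "((\<lambda>w. c * (f w * G w / w) + d * (g w * G w / w)) has_contour_integral
          (c * cesaro_op G f z + d * cesaro_op G g z)) (linepath 0 z)"
    by (intro has_contour_integral_add has_contour_integral_lmul If Ig)
  moreover have "(\<lambda>w. c * (f w * G w / w) + d * (g w * G w / w)) = (\<lambda>w. (c * f w + d * g w) * G w / w)"
    by (auto simp: fun_eq_iff algebra_simps add_divide_distrib)
  ultimately have "((\<lambda>w. (c * f w + d * g w) * G w / w) has_contour_integral
          (c * cesaro_op G f z + d * cesaro_op G g z)) (linepath 0 z)" by simp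
  then show ?thesis unfolding cesaro_op_def[of G "\<lambda>w. c * f w + d * g w"]
    by (rule contour_integral_unique)
qed

lemma T_compact:
  assumes fsX: "\<And>n. fs n \<in> bloch0_space \<alpha>" and bdd: "bdd_above (range (\<lambda>n. bloch_norm \<alpha> (fs n)))"
  shows "\<exists>(r :: nat \<Rightarrow> nat) F. strict_mono r \<and> F \<in> bloch0_space \<alpha> \<and>
           (\<lambda>n. bloch_norm \<alpha> (cesaro_op G (fs (r n)) - F)) \<longlonglongrightarrow> 0"
proof -
  obtain M where M: "\<And>n. bloch_norm \<alpha> (fs n) \<le> M" using bdd by (auto simp: bdd_above_def)
  have Mnn: "M \<ge> 0" using X_growth(1)[OF fsX[of 0]] M[of 0] by linarith
  have holfs: "\<And>n. fs n holomorphic_on ball 0 1" and fs0: "\<And>n. fs n 0 = 0"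
    using fsX by (auto simp: bloch0_space_def bloch_space_def)
  have fsb: "norm (fs n w) \<le> M / \<gamma> * (1 - norm w) powr (-\<gamma>)" if "w \<in> ball 0 1" for n w
  proof -
    have "norm (fs n w) \<le> bloch_norm \<alpha> (fs n) / \<gamma> * (1 - norm w) powr (-\<gamma>)"
      by (rule X_growth(2)[OF fsX that])
    also have "\<dots> \<le> M / \<gamma> * (1 - norm w) powr (-\<gamma>)"
      using M[of n] gpos by (intro mult_right_mono divide_right_mono) auto
    finally show ?thesis .
  qed
  have bK: "\<exists>B. \<forall>h\<in>range fs. \<forall>z\<in>K. norm (h z) \<le> B" if K: "compact K" "K \<subseteq> ball 0 1" for K
  proof (cases "K = {}")
    case True then show ?thesis by auto
  next
    case False
    obtain x where x: "x \<in> K" "\<And>y. y \<in> K \<Longrightarrow> norm y \<le> norm x"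
      using continuous_attains_sup[OF K(1) False continuous_on_norm_id] by blast
    have x1: "norm x < 1" using x(1) K(2) by auto
    show ?thesis
    proof (intro exI ballI)
      fix h z assume h: "h \<in> range fs" and z: "z \<in> K"
      then obtain n where hn: "h = fs n" by auto
      have zb: "z \<in> ball 0 1" using z K(2) by auto
      have "norm (fs n z) \<le> M / \<gamma> * (1 - norm z) powr (-\<gamma>)" by (rule fsb[OF zb])
      also have "\<dots> \<le> M / \<gamma> * (1 - norm x) powr (-\<gamma>)"
        using x(2)[OF z] x1 Mnn gpos by (intro mult_left_mono powr_mono2') auto
      finally show "norm (h z) \<le> M / \<gamma> * (1 - norm x) powr (-\<gamma>)" by (simp add: hn)
    qed
  qed
  have holR: "\<And>h. h \<in> range fs \<Longrightarrow> h holomorphic_on ball 0 1" using holfs by auto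
  obtain g r where holg: "g holomorphic_on ball 0 1" and r: "strict_mono (r :: nat \<Rightarrow> nat)"
    and lim: "\<And>x. x \<in> ball 0 1 \<Longrightarrow> (\<lambda>n. fs (r n) x) \<longlonglongrightarrow> g x"
    and ul: "\<And>K. compact K \<Longrightarrow> K \<subseteq> ball 0 1 \<Longrightarrow> uniform_limit K (fs \<circ> r) g sequentially"
    using Montel[OF open_ball holR bK order_refl] by blast
  have g0: "g 0 = 0"
  proof -
    have "(\<lambda>n. fs (r n) 0) \<longlonglongrightarrow> g 0" by (rule lim) simp
    then have "(\<lambda>n. 0) \<longlonglongrightarrow> g 0" by (simp add: fs0)
    then show ?thesis using LIMSEQ_unique[OF _ tendsto_const] by metis
  qed
  have gb: "norm (g w) \<le> M / \<gamma> * (1 - norm w) powr (-\<gamma>)" if w: "w \<in> ball 0 1" for w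
    using LIMSEQ_le_const2[OF tendsto_norm[OF lim[OF w]]] fsb[OF w] by blast
  have Kg: "M / \<gamma> \<ge> 0" using Mnn gpos by simp
  define F where "F = cesaro_op G g"
  have FX: "F \<in> bloch0_space \<alpha>" unfolding F_def by (rule T_in_X(1)[OF holg g0 Kg gb])
  have derF: "\<And>z. z \<in> ball 0 1 \<Longrightarrow> (F has_field_derivative qf g z * G z) (at z)"
    unfolding F_def by (rule cesaro_props(2)[OF holg g0 holG])
  have derfs: "\<And>n z. z \<in> ball 0 1 \<Longrightarrow> (cesaro_op G (fs n) has_field_derivative qf (fs n) z * G z) (at z)"
    by (rule cesaro_props(2)[OF holfs fs0 holG])
  have conv: "(\<lambda>n. bloch_norm \<alpha> (cesaro_op G (fs (r n)) - F)) \<longlonglongrightarrow> 0"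
  proof (rule LIMSEQ_I)
    fix \<epsilon> :: real assume \<epsilon>: "\<epsilon> > 0"
    define A where "A = 2 powr \<alpha> * 2 powr (\<gamma>+1) * (2 * (M / \<gamma>)) * C"
    have Ann: "A \<ge> 0" unfolding A_def using Kg Cnn by (intro mult_nonneg_nonneg) auto
    define e where "e = \<alpha> - \<gamma> - \<beta>p"
    have e: "e > 0" using epos by (simp add: e_def)
    define t where "t = (\<epsilon> / (2 * (A + 1))) powr (1 / e)"
    have tpos: "t > 0" using \<epsilon> Ann by (simp add: t_def)
    define s0 where "s0 = min t (1/2)"
    have s0: "0 < s0" "s0 \<le> 1/2" "s0 \<le> t" using tpos by (auto simp: s0_def)
    have te: "t powr e = \<epsilon> / (2 * (A + 1))"
      using e \<epsilon> Ann by (simp add: t_def powr_powr)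
    have s0e: "s0 powr e \<le> \<epsilon> / (2 * (A + 1))"
      using powr_mono2[of e s0 t] e s0 te by simp
    define R where "R = 1 - s0"
    have R: "0 < R" "R < 1" using s0 by (auto simp: R_def)
    define D where "D = C * s0 powr (-\<beta>p)"
    have Dnn: "D \<ge> 0" using Cnn by (simp add: D_def)
    define \<delta> where "\<delta> = \<epsilon> / (4 * (D + 1))"
    have \<delta>: "\<delta> > 0" using \<epsilon> Dnn by (simp add: \<delta>_def)
    have cb: "compact (cball (0::complex) ((1+R)/2))" "cball (0::complex) ((1+R)/2) \<subseteq> ball 0 1"
      using R by auto
    have "\<forall>\<^sub>F n in sequentially. \<forall>x\<in>cball 0 ((1+R)/2). dist ((fs \<circ> r) n x) (g x) < \<delta>"
      by (rule uniform_limitD[OF ul[OF cb] \<delta>])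
    then obtain n0 where n0: "\<And>n x. n \<ge> n0 \<Longrightarrow> x \<in> cball 0 ((1+R)/2) \<Longrightarrow> dist (fs (r n) x) (g x) < \<delta>"
      unfolding eventually_sequentially o_def by blast
    show "\<exists>no. \<forall>n\<ge>no. norm (bloch_norm \<alpha> (cesaro_op G (fs (r n)) - F) - 0) < \<epsilon>"
    proof (intro exI allI impI)
      fix n assume n: "n \<ge> n0"
      define d where "d = (\<lambda>w. fs (r n) w - g w)"
      have hold: "d holomorphic_on ball 0 1" unfolding d_def using holfs holg by (intro holomorphic_intros)
      have d0: "d 0 = 0" using fs0 g0 by (simp add: d_def)
      have dK: "norm (d w) \<le> (2 * (M / \<gamma>)) * (1 - norm w) powr (-\<gamma>)" if w: "w \<in> ball 0 1" for w
      proof -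
        have "norm (d w) \<le> norm (fs (r n) w) + norm (g w)" unfolding d_def by (rule norm_triangle_ineq4)
        also have "\<dots> \<le> M / \<gamma> * (1 - norm w) powr (-\<gamma>) + M / \<gamma> * (1 - norm w) powr (-\<gamma>)"
          by (intro add_mono fsb gb w)
        finally show ?thesis by simp
      qed
      have d\<delta>: "norm (d w) \<le> \<delta>" if "w \<in> cball 0 ((1+R)/2)" for w
        using n0[OF n that] by (simp add: d_def dist_norm)
      have derv: "deriv (cesaro_op G (fs (r n)) - F) z = qf d z * G z" if z: "z \<in> ball 0 1" for z
      proof -
        have "((\<lambda>x. cesaro_op G (fs (r n)) x - F x) has_field_derivative
                 qf (fs (r n)) z * G z - qf g z * G z) (at z)"
          by (intro DERIV_diff derfs derF z)
        moreover have "qf (fs (r n)) z * G z - qf g z * G z = qf d z * G z"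
          using qf_diff[OF holfs holg, of "r n" z] unfolding d_def by (simp add: left_diff_distrib)
        ultimately have "((\<lambda>x. cesaro_op G (fs (r n)) x - F x) has_field_derivative qf d z * G z) (at z)"
          by simp
        then show ?thesis by (simp add: fun_diff_def DERIV_imp_deriv)
      qed
      have pt: "(1 - (norm z)\<^sup>2) powr \<alpha> * norm (deriv (cesaro_op G (fs (r n)) - F) z) \<le> \<epsilon> / 2"
        if z: "z \<in> ball 0 1" for z
      proof (cases "norm z \<le> R")
        case True
        have "(1 - (norm z)\<^sup>2) powr \<alpha> * norm (deriv (cesaro_op G (fs (r n)) - F) z)
              \<le> 2 * \<delta> * (C * (1 - R) powr (-\<beta>p))"
          using inner_bound[OF hold d0 R(1) R(2) less_imp_le[OF \<delta>] d\<delta> z True] derv[OF z] by simp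
        also have "\<dots> = 2 * \<delta> * D" by (simp add: D_def R_def)
        also have "\<dots> \<le> \<epsilon> / 2"
        proof -
          have "2 * \<delta> * D = \<epsilon> / 2 * (D / (D + 1))" using Dnn by (simp add: \<delta>_def field_simps)
          also have "\<dots> \<le> \<epsilon> / 2 * 1" using Dnn \<epsilon> by (intro mult_left_mono) auto
          finally show ?thesis by simp
        qed
        finally show ?thesis .
      next
        case False
        have "(1 - (norm z)\<^sup>2) powr \<alpha> * norm (deriv (cesaro_op G (fs (r n)) - F) z)
              \<le> A * (1 - norm z) powr e"
          using weight_bound[OF hold d0 _ dK z] derv[OF z] Kg by (simp add: A_def e_def)
        also have "\<dots> \<le> A * s0 powr e"
          using False e Ann z by (intro mult_left_mono powr_mono2) (auto simp: R_def)
        also have "\<dots> \<le> A * (\<epsilon> / (2 * (A + 1)))" using s0e Ann by (rule mult_left_mono)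
        also have "\<dots> \<le> \<epsilon> / 2"
        proof -
          have "A * (\<epsilon> / (2 * (A + 1))) = \<epsilon> / 2 * (A / (A + 1))" using Ann by (simp add: field_simps)
          also have "\<dots> \<le> \<epsilon> / 2 * 1" using Ann \<epsilon> by (intro mult_left_mono) auto
          finally show ?thesis by simp
        qed
        finally show ?thesis .
      qed
      have bddn: "bdd_above ((\<lambda>z. (1 - (norm z)\<^sup>2) powr \<alpha> * norm (deriv (cesaro_op G (fs (r n)) - F) z)) ` ball 0 1)"
        by (rule bdd_aboveI2[OF pt])
      have le: "bloch_norm \<alpha> (cesaro_op G (fs (r n)) - F) \<le> \<epsilon> / 2"
        unfolding bloch_norm_def by (rule cSUP_least) (use pt in auto)
      have "0 \<le> (1 - (norm (0::complex))\<^sup>2) powr \<alpha> * norm (deriv (cesaro_op G (fs (r n)) - F) 0)" by simp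
      also have "\<dots> \<le> bloch_norm \<alpha> (cesaro_op G (fs (r n)) - F)"
        unfolding bloch_norm_def by (rule cSUP_upper[OF _ bddn]) simp
      finally have ge: "0 \<le> bloch_norm \<alpha> (cesaro_op G (fs (r n)) - F)" .
      show "norm (bloch_norm \<alpha> (cesaro_op G (fs (r n)) - F) - 0) < \<epsilon>" using le ge \<epsilon> by simp
    qed
  qed
  show ?thesis using r FX conv by blast
qed

end

theorem corollary3p1:
  fixes \<alpha> \<beta> :: real and k :: nat and a b :: "nat \<Rightarrow> complex" and h :: "complex \<Rightarrow> complex"
  assumes "\<alpha> > 0"
    and "(\<beta> < \<alpha> \<and> \<alpha> < 1) \<or> (\<beta> < 1 \<and> 1 < \<alpha>) \<or> (\<beta> < \<alpha> \<and> \<alpha> = 1)"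
    and "k \<ge> 1"
    and "inj_on b {1..k}"
    and "\<forall>j\<in>{1..k}. norm (b j) = 1"
    and "\<forall>j\<in>{1..k}. a j \<noteq> 0"
    and "h holomorphic_on ball 0 1"
    and "bounded (h ` ball 0 1)"
  shows "compact_linear_operator_on (bloch0_space \<alpha>) (bloch_norm \<alpha>)
           (cesaro_op (g_beta \<beta> k a b h))"
proof -
  define G where "G = g_beta \<beta> k a b h"
  define \<beta>p where "\<beta>p = max \<beta> 0"
  define \<gamma> where "\<gamma> = (max (\<alpha> - 1) 0 + (\<alpha> - \<beta>p)) / 2"
  have bp1: "\<beta>p < 1" "\<beta>p < \<alpha>" using assms(1,2) by (auto simp: \<beta>p_def)
  have bp: "\<beta>p \<ge> 0" by (simp add: \<beta>p_def)
  have gpos: "\<gamma> > 0" using bp1 bp by (auto simp: \<gamma>_def max_def field_simps)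
  have ag: "\<alpha> \<le> \<gamma> + 1" using bp1 bp by (auto simp: \<gamma>_def max_def field_simps)
  have epos: "\<alpha> - \<gamma> - \<beta>p > 0" using bp1 bp by (auto simp: \<gamma>_def max_def field_simps)
  have bj: "\<forall>j\<in>{1..k}. norm (b j) \<le> 1" using assms(5) by simp
  obtain Bh where Bh: "\<And>w. w \<in> ball 0 1 \<Longrightarrow> norm (h w) \<le> Bh"
    using assms(8) unfolding bounded_iff by blast
  have Bhnn: "Bh \<ge> 0" using Bh[of 0] norm_ge_zero[of "h 0"] by (meson centre_in_ball order_trans zero_less_one)
  define C where "C = (\<Sum>j=1..k. norm (a j)) * max 1 (2 powr (-\<beta>)) + Bh"
  have Cnn: "C \<ge> 0" unfolding C_def using Bhnn
    by (intro add_nonneg_nonneg mult_nonneg_nonneg sum_nonneg) auto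
  have holG: "G holomorphic_on ball 0 1" unfolding G_def by (rule G_holo[OF bj assms(7)])
  have Gb: "\<forall>w\<in>ball 0 1. norm (G w) \<le> C * (1 - norm w) powr (-\<beta>p)"
    unfolding G_def C_def \<beta>p_def using G_bound[where h=h and Bh=Bh and a=a and \<beta>=\<beta>, OF bj Bh] by blast
  note ctx = assms(1) gpos ag epos bp Cnn holG Gb
  show ?thesis unfolding compact_linear_operator_on_def G_def[symmetric]
  proof (intro conjI ballI allI impI)
    fix f assume fX: "f \<in> bloch0_space \<alpha>"
    have holf: "f holomorphic_on ball 0 1" "f 0 = 0" using fX by (auto simp: bloch0_space_def bloch_space_def)
    have Kf: "bloch_norm \<alpha> f / \<gamma> \<ge> 0" using X_growth(1)[OF ctx fX] gpos by simp
    show "cesaro_op G f \<in> bloch0_space \<alpha>"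
      by (rule T_in_X(1)[OF ctx holf Kf X_growth(2)[OF ctx fX]])
  next
    fix f g :: "complex \<Rightarrow> complex" and c d z :: complex assume "f \<in> bloch0_space \<alpha>" "g \<in> bloch0_space \<alpha>" "z \<in> ball 0 1"
    then show "cesaro_op G (\<lambda>w. c * f w + d * g w) z = c * cesaro_op G f z + d * cesaro_op G g z"
      by (rule T_linear[OF ctx])
  next
    fix fs :: "nat \<Rightarrow> complex \<Rightarrow> complex"
    assume "(\<forall>n. fs n \<in> bloch0_space \<alpha>) \<and> bdd_above (range (\<lambda>n. bloch_norm \<alpha> (fs n)))"
    then show "\<exists>(r :: nat \<Rightarrow> nat) F. strict_mono r \<and> F \<in> bloch0_space \<alpha> \<and>
           (\<lambda>n. bloch_norm \<alpha> (cesaro_op G (fs (r n)) - F)) \<longlonglongrightarrow> 0"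
      using T_compact[OF ctx] by blast
  qed
qed


end
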